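(* Let $(x'_n,y'_n)_{n\in\mathbb Z}$ be an elliptic sequence in general position on a biquadratic polynomial $F$, let $j_1<j_2$ be integers, $w_{j_1},\dots,w_{j_2}\in\mathbb C$, and $f(x)=\sum_{j=j_1}^{j_2}\dfrac{w_j}{x'_j-x}$. Let $A,C$ be polynomials and suppose that the rational function $y\mapsto A(y)(\mathcal Df)(y)-C(y)(\mathcal Mf)(y)$ is a polynomial. Then for $j=j_1,\dots,j_2-1$: $$\frac{w_{j+1}}{(y'_{j+1}-y'_j)X_2(x'_{j+1})}\left(\frac{A(y'_j)}{x'_{j+1}-x'_j}-\frac{C(y'_j)}2\right)=\frac{w_j}{(y'_j-y'_{j-1})X_2(x'_j)}\left(\frac{A(y'_j)}{x'_{j+1}-x'_j}+\frac{C(y'_j)}2\right).$$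
   Context: $F(x,y)=\sum_{i,j=0}^2c_{i,j}x^iy^j=Y_0(y)+xY_1(y)+x^2Y_2(y)=X_0(x)+yX_1(x)+y^2X_2(x)$. An elliptic sequence on $F$ is $(x_n,y_n)_{n\in\mathbb Z}$ such that for every $n$, $x_n,x_{n+1}$ are the two roots of $F(\cdot,y_n)$ and $y_{n-1},y_n$ the two roots of $F(x_n,\cdot)$; general position: the $x'_n$ distinct, the $y'_n$ distinct, $X_2,Y_2$ nonvanishing there. For a rational $f$ and a value $y$ with $x^\pm$ the two roots of $F(x,y)=0$: $(\mathcal Df)(y)=\frac{f(x^+)-f(x^-)}{x^+-x^-}$, $(\mathcal Mf)(y)=\frac{f(x^+)+f(x^-)}2$ (rational functions of $y$). *)

theory Defs
  imports Complex_Main "HOL-Computational_Algebra.Polynomial"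
begin

definition Fb :: "(nat \<Rightarrow> nat \<Rightarrow> complex) \<Rightarrow> complex \<Rightarrow> complex \<Rightarrow> complex" where
  "Fb c x y = (\<Sum>i\<le>2. \<Sum>j\<le>2. c i j * x ^ i * y ^ j)"

text \<open>F = X0(x) + y X1(x) + y^2 X2(x)\<close>
definition X2 :: "(nat \<Rightarrow> nat \<Rightarrow> complex) \<Rightarrow> complex \<Rightarrow> complex" where
  "X2 c x = (\<Sum>i\<le>2. c i 2 * x ^ i)"

text \<open>F = Y0(y) + x Y1(y) + x^2 Y2(y)\<close>
definition Y2 :: "(nat \<Rightarrow> nat \<Rightarrow> complex) \<Rightarrow> complex \<Rightarrow> complex" where
  "Y2 c y = (\<Sum>j\<le>2. c 2 j * y ^ j)"

definition elliptic_seq :: "(nat \<Rightarrow> nat \<Rightarrow> complex) \<Rightarrow> (int \<Rightarrow> complex) \<Rightarrow> (int \<Rightarrow> complex) \<Rightarrow> bool" where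
  "elliptic_seq c xs ys \<longleftrightarrow>
     (\<forall>n. {t. Fb c t (ys n) = 0} = {xs n, xs (n + 1)} \<and>
          {s. Fb c (xs n) s = 0} = {ys (n - 1), ys n})"

definition general_position :: "(nat \<Rightarrow> nat \<Rightarrow> complex) \<Rightarrow> (int \<Rightarrow> complex) \<Rightarrow> (int \<Rightarrow> complex) \<Rightarrow> bool" where
  "general_position c xs ys \<longleftrightarrow>
     inj xs \<and> inj ys \<and> (\<forall>n. X2 c (xs n) \<noteq> 0) \<and> (\<forall>n. Y2 c (ys n) \<noteq> 0)"

text \<open>D f and M f evaluated at y, given the two roots x1, x2 of F(.,y).\<close>
definition Dop :: "(complex \<Rightarrow> complex) \<Rightarrow> complex \<Rightarrow> complex \<Rightarrow> complex" where
  "Dop f x1 x2 = (f x1 - f x2) / (x1 - x2)"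

definition Mop :: "(complex \<Rightarrow> complex) \<Rightarrow> complex \<Rightarrow> complex \<Rightarrow> complex" where
  "Mop f x1 x2 = (f x1 + f x2) / 2"

text \<open>The rational function y \<mapsto> A(y) (Df)(y) - C(y) (Mf)(y) is a polynomial: it agrees with a
  polynomial P at every y where it is given by the defining formula, i.e. Y2(y) \<noteq> 0, the two
  roots of F(.,y) are distinct, and neither root lies in the pole set S of f.
  (These y form a cofinite set, so this is equality of rational functions.)\<close>
definition DM_is_poly :: "(nat \<Rightarrow> nat \<Rightarrow> complex) \<Rightarrow> complex poly \<Rightarrow> complex poly
    \<Rightarrow> (complex \<Rightarrow> complex) \<Rightarrow> complex set \<Rightarrow> bool" where
  "DM_is_poly c A C f S \<longleftrightarrow>
     (\<exists>P :: complex poly. \<forall>y x1 x2.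
        Y2 c y \<noteq> 0 \<longrightarrow> x1 \<noteq> x2 \<longrightarrow> Fb c x1 y = 0 \<longrightarrow> Fb c x2 y = 0 \<longrightarrow>
        x1 \<notin> S \<longrightarrow> x2 \<notin> S \<longrightarrow>
        poly A y * Dop f x1 x2 - poly C y * Mop f x1 x2 = poly P y)"

end

theory Submission
  imports Defs
begin

definition Y0' :: "(nat \<Rightarrow> nat \<Rightarrow> complex) \<Rightarrow> complex \<Rightarrow> complex" where
  "Y0' c y = (\<Sum>j\<le>2. c 0 j * y ^ j)"
definition Y1' :: "(nat \<Rightarrow> nat \<Rightarrow> complex) \<Rightarrow> complex \<Rightarrow> complex" where
  "Y1' c y = (\<Sum>j\<le>2. c 1 j * y ^ j)"
definition X0' :: "(nat \<Rightarrow> nat \<Rightarrow> complex) \<Rightarrow> complex \<Rightarrow> complex" where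
  "X0' c x = (\<Sum>i\<le>2. c i 0 * x ^ i)"
definition X1' :: "(nat \<Rightarrow> nat \<Rightarrow> complex) \<Rightarrow> complex \<Rightarrow> complex" where
  "X1' c x = (\<Sum>i\<le>2. c i 1 * x ^ i)"

lemma Fb_Y: "Fb c x y = Y0' c y + x * Y1' c y + x^2 * Y2 c y"
  by (simp add: Fb_def Y0'_def Y1'_def Y2_def numeral_2_eq_2 algebra_simps)

lemma Fb_X: "Fb c x y = X0' c x + y * X1' c x + y^2 * X2 c x"
  by (simp add: Fb_def X0'_def X1'_def X2_def numeral_2_eq_2 algebra_simps)

lemma quad_factor:
  fixes a0 a1 a2 u v t :: complex
  assumes "u \<noteq> v" "a0 + u*a1 + u^2*a2 = 0" "a0 + v*a1 + v^2*a2 = 0"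
  shows "a1 = - a2 * (u + v)" "a0 = a2 * u * v" "a0 + t*a1 + t^2*a2 = a2*(t-u)*(t-v)"
proof -
  have "(u - v) * (a1 + a2 * (u + v)) = (a0 + u*a1 + u^2*a2) - (a0 + v*a1 + v^2*a2)"
    by (simp add: algebra_simps power2_eq_square)
  also have "\<dots> = 0" using assms(2,3) by simp
  finally have "a1 + a2 * (u + v) = 0" using assms(1) by simp
  then show a1: "a1 = - a2 * (u + v)" by (simp add: algebra_simps eq_neg_iff_add_eq_0)
  show a0: "a0 = a2 * u * v" using assms(2) a1 by (simp add: algebra_simps power2_eq_square)
  show "a0 + t*a1 + t^2*a2 = a2*(t-u)*(t-v)" by (simp only: a0 a1) (simp add: algebra_simps power2_eq_square)
qed

lemma quad_root:
  fixes a0 a1 a2 s x :: complex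
  assumes "a2 \<noteq> 0" "s^2 = a1^2 - 4*a0*a2" "x = (- a1 + s) / (2*a2) \<or> x = (- a1 - s) / (2*a2)"
  shows "a0 + x*a1 + x^2*a2 = 0"
proof -
  have "4*a2*(a0 + x*a1 + x^2*a2) = 4*a0*a2 + (2*a2*x)*2*a1 + (2*a2*x)^2"
    by (simp add: algebra_simps power2_eq_square)
  also have "\<dots> = 0"
  proof -
    have "2*a2*x = - a1 + s \<or> 2*a2*x = - a1 - s" using assms(1,3) by auto
    then show ?thesis
    proof
      assume h: "2*a2*x = - a1 + s"
      have "4*a0*a2 + (2*a2*x)*2*a1 + (2*a2*x)^2 = 4*a0*a2 - a1^2 + s^2"
        unfolding h by (simp add: algebra_simps power2_eq_square)
      then show ?thesis using assms(2) by simp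
    next
      assume h: "2*a2*x = - a1 - s"
      have "4*a0*a2 + (2*a2*x)*2*a1 + (2*a2*x)^2 = 4*a0*a2 - a1^2 + s^2"
        unfolding h by (simp add: algebra_simps power2_eq_square)
      then show ?thesis using assms(2) by simp
    qed
  qed
  finally show ?thesis using assms(1) by simp
qed

lemma dfrac0:
  fixes p q w Y :: complex
  assumes "p \<noteq> 0" "q \<noteq> 0" "q - p \<noteq> 0" "Y \<noteq> 0"
  shows "(w / p - w / q) / (q - p) = w * Y / (Y * p * q)"
  using assms by (simp add: field_simps)

lemma dfrac:
  fixes a x1 x2 w Y :: complex
  assumes "a - x1 \<noteq> 0" "a - x2 \<noteq> 0" "x1 \<noteq> x2" "Y \<noteq> 0"
  shows "(w / (a - x1) - w / (a - x2)) / (x1 - x2) = w * Y / (Y * (a - x1) * (a - x2))"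
proof -
  have "x1 - x2 = (a - x2) - (a - x1)" by simp
  moreover have "(a - x2) - (a - x1) \<noteq> 0" using assms(3) by simp
  ultimately show ?thesis using dfrac0[OF assms(1,2) _ assms(4), of w] by simp
qed

lemma mfrac0:
  fixes p q w Y :: complex
  assumes "p \<noteq> 0" "q \<noteq> 0" "Y \<noteq> 0"
  shows "(w / p + w / q) / 2 = w * Y * (p + q) / 2 / (Y * p * q)"
  using assms by (simp add: field_simps)

lemma mfrac:
  fixes a x1 x2 w Y :: complex
  assumes "a - x1 \<noteq> 0" "a - x2 \<noteq> 0" "Y \<noteq> 0"
  shows "(w / (a - x1) + w / (a - x2)) / 2 = w * (a * Y + - Y * (x1 + x2) / 2) / (Y * (a - x1) * (a - x2))"
proof -
  have "w * Y * ((a - x1) + (a - x2)) / 2 = w * (a * Y + - Y * (x1 + x2) / 2)"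
    by (simp add: field_simps)
  have "(w / (a - x1) + w / (a - x2)) / 2 = w * Y * ((a - x1) + (a - x2)) / 2 / (Y * (a - x1) * (a - x2))"
    by (rule mfrac0[OF assms])
  also have "\<dots> = w * (a * Y + - Y * (x1 + x2) / 2) / (Y * (a - x1) * (a - x2))"
    by (simp only: \<open>w * Y * ((a - x1) + (a - x2)) / 2 = w * (a * Y + - Y * (x1 + x2) / 2)\<close>)
  finally show ?thesis .
qed

lemma cancel1:
  fixes d X e :: complex
  assumes "d \<noteq> 0"
  shows "d / (X * e * d) = 1 / (X * e)" "d / (X * d * e) = 1 / (X * e)"
  using assms by (cases "X * e = 0"; auto simp: field_simps)+

lemma termeq:
  fixes d A C w Y Z F :: complex
  shows "d * (A * (w * Y / F) - C * (w * Z / F)) = w * (A * Y - C * Z) * (d / F)"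
proof (cases "F = 0")
  case True then show ?thesis by simp
next
  case False then show ?thesis by (simp add: field_simps)
qed

theorem mainTheorem13:
  fixes c :: "nat \<Rightarrow> nat \<Rightarrow> complex"
    and xs ys :: "int \<Rightarrow> complex"
    and j1 j2 :: int
    and w :: "int \<Rightarrow> complex"
    and f :: "complex \<Rightarrow> complex"
    and A C :: "complex poly"
  assumes ell: "elliptic_seq c xs ys"
    and gp: "general_position c xs ys"
    and jj: "j1 < j2"
    and f_def: "\<And>x. f x = (\<Sum>j = j1..j2. w j / (xs j - x))"
    and hpoly: "DM_is_poly c A C f (xs ` {j1..j2})"
  shows "\<forall>j \<in> {j1..j2 - 1}.
     w (j + 1) / ((ys (j + 1) - ys j) * X2 c (xs (j + 1)))
       * (poly A (ys j) / (xs (j + 1) - xs j) - poly C (ys j) / 2)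
   = w j / ((ys j - ys (j - 1)) * X2 c (xs j))
       * (poly A (ys j) / (xs (j + 1) - xs j) + poly C (ys j) / 2)"
proof
  fix j assume jI: "j \<in> {j1..j2 - 1}"
  define yj where "yj = ys j"
  define I where "I = {j1..j2}"
  have jI1: "j \<in> I" and jI2: "j + 1 \<in> I" using jI unfolding I_def by auto
  have finI: "finite I" unfolding I_def by simp
  have injx: "inj xs" and injy: "inj ys" and X2nz: "\<And>n. X2 c (xs n) \<noteq> 0"
    and Y2nz: "\<And>n. Y2 c (ys n) \<noteq> 0"
    using gp unfolding general_position_def by auto
  have root1: "Fb c (xs n) (ys n) = 0" for n
  proof -
    have "ys n \<in> {s. Fb c (xs n) s = 0}" using ell unfolding elliptic_seq_def by blast
    then show ?thesis by simp
  qed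
  have root2: "Fb c (xs n) (ys (n - 1)) = 0" for n
  proof -
    have "ys (n - 1) \<in> {s. Fb c (xs n) s = 0}" using ell unfolding elliptic_seq_def by blast
    then show ?thesis by simp
  qed
  have root3: "Fb c (xs (n + 1)) (ys n) = 0" for n
  proof -
    have "xs (n + 1) \<in> {t. Fb c t (ys n) = 0}" using ell unfolding elliptic_seq_def by blast
    then show ?thesis by simp
  qed
  have Fk: "Fb c (xs k) y = X2 c (xs k) * (y - ys (k - 1)) * (y - ys k)" for k y
  proof -
    have ne: "ys (k - 1) \<noteq> ys k" using injy by (simp add: inj_eq)
    have a: "X0' c (xs k) + ys (k - 1) * X1' c (xs k) + (ys (k - 1))^2 * X2 c (xs k) = 0"
      using root2[of k] by (simp add: Fb_X)
    have b: "X0' c (xs k) + ys k * X1' c (xs k) + (ys k)^2 * X2 c (xs k) = 0"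
      using root1[of k] by (simp add: Fb_X)
    show ?thesis using quad_factor(3)[OF ne a b, of y] by (simp add: Fb_X)
  qed
  have xne: "xs j \<noteq> xs (j + 1)" using injx by (simp add: inj_eq)
  have ra: "Y0' c yj + xs j * Y1' c yj + (xs j)^2 * Y2 c yj = 0"
    using root1[of j] by (simp add: Fb_Y yj_def)
  have rb: "Y0' c yj + xs (j + 1) * Y1' c yj + (xs (j + 1))^2 * Y2 c yj = 0"
    using root3[of j] by (simp add: Fb_Y yj_def)
  have Y1j: "Y1' c yj = - Y2 c yj * (xs j + xs (j + 1))" by (rule quad_factor(1)[OF xne ra rb])
  have Y0j: "Y0' c yj = Y2 c yj * xs j * xs (j + 1)" by (rule quad_factor(2)[OF xne ra rb])
  have Y2j: "Y2 c yj \<noteq> 0" unfolding yj_def by (rule Y2nz)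
  define disc where "disc y = (Y1' c y)^2 - 4 * Y0' c y * Y2 c y" for y
  have discj: "disc yj \<noteq> 0"
  proof -
    have "disc yj = (Y2 c yj)^2 * (xs j - xs (j + 1))^2"
      unfolding disc_def Y1j Y0j by (simp add: algebra_simps power2_eq_square)
    then show ?thesis using Y2j xne by simp
  qed
  have tY2: "(Y2 c \<longlongrightarrow> Y2 c yj) (at yj)"
    unfolding Y2_def by (intro tendsto_intros)
  have tdisc: "(disc \<longlongrightarrow> disc yj) (at yj)"
    unfolding disc_def Y2_def Y1'_def Y0'_def by (intro tendsto_intros)
  have ev1: "eventually (\<lambda>y. Y2 c y \<noteq> 0) (at yj)"
    by (rule tendsto_imp_eventually_ne[OF tY2 Y2j])
  have ev2: "eventually (\<lambda>y. disc y \<noteq> 0) (at yj)"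
    by (rule tendsto_imp_eventually_ne[OF tdisc discj])
  have ev3: "eventually (\<lambda>y. \<forall>k\<in>{j1 - 1..j2}. y \<noteq> ys k) (at yj)"
    by (intro eventually_ball_finite) (auto intro: eventually_neq_at_within)
  obtain P where hP: "\<And>y x1 x2. Y2 c y \<noteq> 0 \<Longrightarrow> x1 \<noteq> x2 \<Longrightarrow> Fb c x1 y = 0 \<Longrightarrow> Fb c x2 y = 0 \<Longrightarrow>
        x1 \<notin> xs ` I \<Longrightarrow> x2 \<notin> xs ` I \<Longrightarrow>
        poly A y * Dop f x1 x2 - poly C y * Mop f x1 x2 = poly P y"
    using hpoly unfolding DM_is_poly_def I_def by blast
  define N where "N = (\<lambda>k y. poly A y * Y2 c y - poly C y * (xs k * Y2 c y + Y1' c y / 2))"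
  define h where "h = (\<lambda>k y. if k = j then 1 / (X2 c (xs j) * (y - ys (j - 1)))
      else if k = j + 1 then 1 / (X2 c (xs (j + 1)) * (y - ys (j + 1)))
      else (y - yj) / Fb c (xs k) y)"
  define G where "G = (\<lambda>y. \<Sum>k\<in>I. w k * N k y * h k y)"
  have evE: "eventually (\<lambda>y. (y - yj) * poly P y = G y) (at yj)"
  proof (rule eventually_mono[OF eventually_conj[OF ev1 eventually_conj[OF ev2 ev3]]])
    fix y assume asm: "Y2 c y \<noteq> 0 \<and> disc y \<noteq> 0 \<and> (\<forall>k\<in>{j1 - 1..j2}. y \<noteq> ys k)"
    then have Y2y: "Y2 c y \<noteq> 0" and discy: "disc y \<noteq> 0" and yne: "\<And>k. k \<in> {j1 - 1..j2} \<Longrightarrow> y \<noteq> ys k"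
      by auto
    define s where "s = csqrt (disc y)"
    have s2: "s^2 = (Y1' c y)^2 - 4 * Y0' c y * Y2 c y" unfolding s_def disc_def[symmetric] by simp
    have snz: "s \<noteq> 0" using discy unfolding s_def by simp
    define x1 where "x1 = (- Y1' c y + s) / (2 * Y2 c y)"
    define x2 where "x2 = (- Y1' c y - s) / (2 * Y2 c y)"
    have x12: "x1 \<noteq> x2"
    proof
      assume "x1 = x2"
      then have "- Y1' c y + s = - Y1' c y - s" unfolding x1_def x2_def using Y2y by (simp add: divide_cancel_right)
      then show False using snz by simp
    qed
    have F1: "Y0' c y + x1 * Y1' c y + x1^2 * Y2 c y = 0"
      by (rule quad_root[OF Y2y s2]) (simp add: x1_def)
    have F2: "Y0' c y + x2 * Y1' c y + x2^2 * Y2 c y = 0"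
      by (rule quad_root[OF Y2y s2]) (simp add: x2_def)
    have Y1y: "Y1' c y = - Y2 c y * (x1 + x2)" by (rule quad_factor(1)[OF x12 F1 F2])
    have Fy: "Fb c t y = Y2 c y * (t - x1) * (t - x2)" for t
      using quad_factor(3)[OF x12 F1 F2, of t] by (simp add: Fb_Y)
    have Fknz: "Fb c (xs k) y \<noteq> 0" if "k \<in> I" for k
    proof -
      have "k - 1 \<in> {j1 - 1..j2}" "k \<in> {j1 - 1..j2}" using that unfolding I_def by auto
      then have "y \<noteq> ys (k - 1)" "y \<noteq> ys k" using yne by auto
      then show ?thesis unfolding Fk using X2nz by simp
    qed
    have d1: "xs k - x1 \<noteq> 0" and d2: "xs k - x2 \<noteq> 0" if "k \<in> I" for k
      using Fknz[OF that] unfolding Fy by auto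
    have nS1: "x1 \<notin> xs ` I" using d1 by force
    have nS2: "x2 \<notin> xs ` I" using d2 by force
    have F1': "Fb c x1 y = 0" using F1 by (simp add: Fb_Y)
    have F2': "Fb c x2 y = 0" using F2 by (simp add: Fb_Y)
    have PP: "poly A y * Dop f x1 x2 - poly C y * Mop f x1 x2 = poly P y"
      by (rule hP[OF Y2y x12 F1' F2' nS1 nS2])
    have Dsum: "Dop f x1 x2 = (\<Sum>k\<in>I. w k * Y2 c y / Fb c (xs k) y)"
    proof -
      have "Dop f x1 x2 = (\<Sum>k\<in>I. (w k / (xs k - x1) - w k / (xs k - x2)) / (x1 - x2))"
        unfolding Dop_def f_def I_def[symmetric] by (simp add: sum_divide_distrib[symmetric] sum_subtractf)
      also have "\<dots> = (\<Sum>k\<in>I. w k * Y2 c y / Fb c (xs k) y)"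
      proof (rule sum.cong[OF refl])
        fix k assume kI: "k \<in> I"
        show "(w k / (xs k - x1) - w k / (xs k - x2)) / (x1 - x2) = w k * Y2 c y / Fb c (xs k) y"
          unfolding Fy by (rule dfrac[OF d1[OF kI] d2[OF kI] x12 Y2y])
      qed
      finally show ?thesis .
    qed
    have Msum: "Mop f x1 x2 = (\<Sum>k\<in>I. w k * (xs k * Y2 c y + Y1' c y / 2) / Fb c (xs k) y)"
    proof -
      have "Mop f x1 x2 = (\<Sum>k\<in>I. (w k / (xs k - x1) + w k / (xs k - x2)) / 2)"
        unfolding Mop_def f_def I_def[symmetric] by (simp add: sum_divide_distrib[symmetric] sum.distrib)
      also have "\<dots> = (\<Sum>k\<in>I. w k * (xs k * Y2 c y + Y1' c y / 2) / Fb c (xs k) y)"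
      proof (rule sum.cong[OF refl])
        fix k assume kI: "k \<in> I"
        show "(w k / (xs k - x1) + w k / (xs k - x2)) / 2 = w k * (xs k * Y2 c y + Y1' c y / 2) / Fb c (xs k) y"
          unfolding Fy Y1y by (rule mfrac[OF d1[OF kI] d2[OF kI] Y2y])
      qed
      finally show ?thesis .
    qed
    have "(y - yj) * poly P y = (\<Sum>k\<in>I. (y - yj) * (poly A y * (w k * Y2 c y / Fb c (xs k) y)
         - poly C y * (w k * (xs k * Y2 c y + Y1' c y / 2) / Fb c (xs k) y)))"
      unfolding PP[symmetric] Dsum Msum
      by (simp add: sum_distrib_left sum_subtractf right_diff_distrib)
    also have "\<dots> = (\<Sum>k\<in>I. w k * N k y * ((y - yj) / Fb c (xs k) y))"
      unfolding N_def by (rule sum.cong[OF refl], rule termeq)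
    also have "\<dots> = G y" unfolding G_def
    proof (rule sum.cong[OF refl])
      fix k assume kI: "k \<in> I"
      have yj0: "y - yj \<noteq> 0" using yne[of j] jI unfolding yj_def by auto
      have "(y - yj) / Fb c (xs k) y = h k y"
      proof (cases "k = j")
        case True
        then show ?thesis unfolding h_def Fk using yj0 by (simp add: yj_def cancel1)
      next
        case False
        show ?thesis
        proof (cases "k = j + 1")
          case True
          then show ?thesis unfolding h_def Fk using yj0 False by (simp add: yj_def cancel1)
        next
          case False2: False
          then show ?thesis unfolding h_def using False by simp
        qed
      qed
      then show "w k * N k y * ((y - yj) / Fb c (xs k) y) = w k * N k y * h k y" by simp
    qed
    finally show "(y - yj) * poly P y = G y" .
  qed
  have tP: "((\<lambda>y. (y - yj) * poly P y) \<longlongrightarrow> 0) (at yj)"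
  proof -
    have "((\<lambda>y. (y - yj) * poly P y) \<longlongrightarrow> (yj - yj) * poly P yj) (at yj)" by (intro tendsto_intros)
    then show ?thesis by simp
  qed
  have tG0: "(G \<longlongrightarrow> 0) (at yj)" by (rule Lim_transform_eventually[OF tP evE])
  have tN: "((\<lambda>y. N k y) \<longlongrightarrow> N k yj) (at yj)" for k
    unfolding N_def Y2_def Y1'_def by (intro tendsto_intros) auto
  have th: "((\<lambda>y. h k y) \<longlongrightarrow> h k yj) (at yj)" for k
  proof (cases "k = j")
    case True
    have "ys j \<noteq> ys (j - 1)" using injy by (simp add: inj_eq)
    then have nz: "X2 c (xs j) * (yj - ys (j - 1)) \<noteq> 0" using X2nz unfolding yj_def by simp
    have "((\<lambda>y. 1 / (X2 c (xs j) * (y - ys (j - 1)))) \<longlongrightarrow> 1 / (X2 c (xs j) * (yj - ys (j - 1)))) (at yj)"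
      by (intro tendsto_intros nz)
    then show ?thesis unfolding h_def using True by simp
  next
    case False
    show ?thesis
    proof (cases "k = j + 1")
      case True
      have "ys j \<noteq> ys (j + 1)" using injy by (simp add: inj_eq)
      then have nz: "X2 c (xs (j + 1)) * (yj - ys (j + 1)) \<noteq> 0" using X2nz unfolding yj_def by simp
      have "((\<lambda>y. 1 / (X2 c (xs (j + 1)) * (y - ys (j + 1)))) \<longlongrightarrow> 1 / (X2 c (xs (j + 1)) * (yj - ys (j + 1)))) (at yj)"
        by (intro tendsto_intros nz)
      then show ?thesis unfolding h_def using True False by simp
    next
      case False2: False
      have "ys j \<noteq> ys (k - 1)" "ys j \<noteq> ys k" using injy False False2 by (auto simp add: inj_eq)
      then have nz: "X2 c (xs k) * (yj - ys (k - 1)) * (yj - ys k) \<noteq> 0" using X2nz unfolding yj_def by simp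
      have "((\<lambda>y. (y - yj) / (X2 c (xs k) * (y - ys (k - 1)) * (y - ys k))) \<longlongrightarrow>
           (yj - yj) / (X2 c (xs k) * (yj - ys (k - 1)) * (yj - ys k))) (at yj)"
        by (intro tendsto_intros nz)
      then show ?thesis unfolding h_def Fk using False False2 by simp
    qed
  qed
  have tG: "(G \<longlongrightarrow> G yj) (at yj)"
    unfolding G_def
    by (rule tendsto_sum, rule tendsto_mult, rule tendsto_mult, rule tendsto_const, rule tN, rule th)
  have G0: "G yj = 0" using tendsto_unique[OF at_neq_bot tG tG0] .
  have hk: "h k yj = 0" if "k \<noteq> j" "k \<noteq> j + 1" for k using that by (simp add: h_def)
  have "G yj = (\<Sum>k\<in>I. (if k = j then w j * N j yj * h j yj else 0)
        + (if k = j + 1 then w (j + 1) * N (j + 1) yj * h (j + 1) yj else 0))"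
    unfolding G_def by (rule sum.cong[OF refl]) (auto simp: hk)
  also have "\<dots> = w j * N j yj * h j yj + w (j + 1) * N (j + 1) yj * h (j + 1) yj"
    using jI1 jI2 finI by (simp add: sum.distrib)
  finally have Gj: "w j * N j yj * h j yj + w (j + 1) * N (j + 1) yj * h (j + 1) yj = 0" using G0 by simp
  define Dl where "Dl = xs (j + 1) - xs j"
  define a0 where "a0 = poly A yj"
  define c0 where "c0 = poly C yj"
  define Y where "Y = Y2 c yj"
  define u where "u = w j / ((yj - ys (j - 1)) * X2 c (xs j))"
  define v where "v = w (j + 1) / ((ys (j + 1) - yj) * X2 c (xs (j + 1)))"
  have Dlnz: "Dl \<noteq> 0" using xne unfolding Dl_def by simp
  have Ynz: "Y \<noteq> 0" using Y2j unfolding Y_def .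
  have Nj: "N j yj = Y * (a0 + c0 * Dl / 2)"
    unfolding N_def Y1j Y_def a0_def c0_def Dl_def by (simp add: field_simps)
  have Nj1: "N (j + 1) yj = Y * (a0 - c0 * Dl / 2)"
    unfolding N_def Y1j Y_def a0_def c0_def Dl_def by (simp add: field_simps)
  have t1: "w j * N j yj * h j yj = Y * (a0 + c0 * Dl / 2) * u"
    unfolding Nj u_def h_def by (simp add: mult.commute)
  have t2: "w (j + 1) * N (j + 1) yj * h (j + 1) yj = - (Y * (a0 - c0 * Dl / 2) * v)"
  proof -
    have eq: "(yj - ys (j + 1)) * X2 c (xs (j + 1)) = - ((ys (j + 1) - yj) * X2 c (xs (j + 1)))"
      by (simp add: algebra_simps)
    have "w (j + 1) * N (j + 1) yj * h (j + 1) yj = w (j + 1) * (Y * (a0 - c0 * Dl / 2)) / ((yj - ys (j + 1)) * X2 c (xs (j + 1)))"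
      unfolding Nj1 h_def by (simp add: mult.commute)
    also have "\<dots> = - (Y * (a0 - c0 * Dl / 2) * v)"
      unfolding eq v_def by (simp add: mult.commute)
    finally show ?thesis .
  qed
  have "Y * ((a0 + c0 * Dl / 2) * u - (a0 - c0 * Dl / 2) * v) = 0"
    using Gj unfolding t1 t2 by (simp add: algebra_simps)
  then have uv: "(a0 - c0 * Dl / 2) * v = (a0 + c0 * Dl / 2) * u" using Ynz by simp
  have e1: "v * (a0 / Dl - c0 / 2) = (a0 - c0 * Dl / 2) * v / Dl" using Dlnz by (simp add: field_simps)
  have e2: "u * (a0 / Dl + c0 / 2) = (a0 + c0 * Dl / 2) * u / Dl" using Dlnz by (simp add: field_simps)
  have "v * (a0 / Dl - c0 / 2) = u * (a0 / Dl + c0 / 2)" unfolding e1 e2 uv ..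
  then show "w (j + 1) / ((ys (j + 1) - ys j) * X2 c (xs (j + 1)))
       * (poly A (ys j) / (xs (j + 1) - xs j) - poly C (ys j) / 2)
   = w j / ((ys j - ys (j - 1)) * X2 c (xs j))
       * (poly A (ys j) / (xs (j + 1) - xs j) + poly C (ys j) / 2)"
    unfolding u_def v_def a0_def c0_def Dl_def yj_def .
qed

end
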